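(* Let $\mathbf a\in L^\infty((0,T)\times\mathbb R^N;\mathbb R^N)$. Let $p=(p_1,\dots,p_N)$ and $q=(q_1,\dots,q_N)$ with $p_i,q_i\in\mathrm{Lip}_{loc}([0,T]\times\mathbb R^N)$ satisfying $\partial_tp_i+\mathbf a\cdot\nabla p_i=0$ and $\partial_tq_i+\mathbf a\cdot\nabla q_i=0$ a.e. in $(0,T)\times\mathbb R^N$, and $p_i(T,\cdot)=q_i(T,\cdot)$ for all $i$. Assume $J(p),J(q)\in\mathcal V^T$ (this holds in particular if $J(p)\ge0$ and $J(q)\ge0$). Then $J(p)=J(q)$ almost everywhere in $(0,T)\times\mathbb R^N$.
   Context: $J(p)=\det(\nabla p_1,\dots,\nabla p_N)$ with spatial gradients. $\mathcal W^T$ denotes the set of $\pi\in C([0,T],L^\infty_{loc}(\mathbb R^N)\text{ weak-*})$ which satisfy $\partial_t\pi+\operatorname{div}(\mathbf a\pi)=0$ in the sense of distributions on $(0,T)\times\mathbb R^N$. $\mathcal E^T$ is the set of real-valued $p\in\mathrm{Lip}_{loc}([0,T]\times\mathbb R^N)$ with $\partial_tp+\mathbf a\cdot\nabla p=0$ a.e. in $(0,T)\times\mathbb R^N$ and $p(T,\cdot)=0$; $V^T_e=\bigcup_{p\in\mathcal E^T}\{(t,x)\in(0,T)\times\mathbb R^N: p(t,x)\neq0\}$; $\mathcal V^T=\{\pi\in\mathcal W^T:\pi=0\text{ a.e. in }V^T_e\}$. *)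

theory Defs
  imports "HOL-Analysis.Analysis"
begin

text \<open>Space-time points are pairs (t,x) in real \<times> real^'n; N = CARD('n).
  Functions on space-time are written curried, f t x.\<close>

abbreviation ucur :: "(real \<Rightarrow> 'b \<Rightarrow> 'c) \<Rightarrow> real \<times> 'b \<Rightarrow> 'c" where
  "ucur f \<equiv> (\<lambda>z. f (fst z) (snd z))"

abbreviation ST :: "real \<Rightarrow> (real \<times> (real^'n)) set" where
  "ST T \<equiv> {0<..<T} \<times> UNIV"

definition dT :: "(real \<Rightarrow> real^'n \<Rightarrow> real) \<Rightarrow> real \<Rightarrow> real^'n \<Rightarrow> real" where
  "dT p t x = frechet_derivative (ucur p) (at (t, x)) (1, 0)"

definition grad :: "(real \<Rightarrow> real^'n \<Rightarrow> real) \<Rightarrow> real \<Rightarrow> real^'n \<Rightarrow> real^'n" where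
  "grad p t x = (\<chi> j. frechet_derivative (ucur p) (at (t, x)) (0, axis j 1))"

definition Jac :: "('n::finite \<Rightarrow> real \<Rightarrow> real^'n \<Rightarrow> real) \<Rightarrow> real \<Rightarrow> real^'n \<Rightarrow> real" where
  "Jac p t x = det (\<chi> i. grad (p i) t x)"

definition Linf_field :: "real \<Rightarrow> (real \<Rightarrow> real^'n \<Rightarrow> real^'n) \<Rightarrow> bool" where
  "Linf_field T a \<longleftrightarrow> set_borel_measurable lebesgue (ST T) (ucur a) \<and>
     (\<exists>M. AE z in lebesgue. z \<in> ST T \<longrightarrow> norm (ucur a z) \<le> M)"

definition Lip_loc :: "real \<Rightarrow> (real \<Rightarrow> real^'n \<Rightarrow> real) \<Rightarrow> bool" where
  "Lip_loc T p \<longleftrightarrow> (\<forall>K. compact K \<and> K \<subseteq> {0..T} \<times> UNIV \<longrightarrow> (\<exists>C. C-lipschitz_on K (ucur p)))"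

definition transport_ae :: "real \<Rightarrow> (real \<Rightarrow> real^'n \<Rightarrow> real^'n) \<Rightarrow> (real \<Rightarrow> real^'n \<Rightarrow> real) \<Rightarrow> bool" where
  "transport_ae T a p \<longleftrightarrow> (AE z in lebesgue. z \<in> ST T \<longrightarrow>
      ucur p differentiable (at z) \<and> dT p (fst z) (snd z) + a (fst z) (snd z) \<bullet> grad p (fst z) (snd z) = 0)"

definition smooth_fun :: "('a::real_normed_vector \<Rightarrow> real) \<Rightarrow> bool" where
  "smooth_fun f \<longleftrightarrow> (\<exists>F. f \<in> F \<and> (\<forall>g\<in>F. (\<forall>z. g differentiable (at z)) \<and>
      (\<forall>v. (\<lambda>z. frechet_derivative g (at z) v) \<in> F)))"

definition test_fun :: "real \<Rightarrow> (real \<Rightarrow> real^'n \<Rightarrow> real) \<Rightarrow> bool" where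
  "test_fun T \<phi> \<longleftrightarrow> smooth_fun (ucur \<phi>) \<and> compact (closure {z. ucur \<phi> z \<noteq> 0}) \<and>
     closure {z. ucur \<phi> z \<noteq> 0} \<subseteq> ST T"

definition Linf_loc :: "(real^'n \<Rightarrow> real) \<Rightarrow> bool" where
  "Linf_loc f \<longleftrightarrow> f \<in> borel_measurable lebesgue \<and>
     (\<forall>K. compact K \<longrightarrow> (\<exists>M. AE x in lebesgue. x \<in> K \<longrightarrow> \<bar>f x\<bar> \<le> M))"

text \<open>W^T: pi in C([0,T], L^\<infinity>_loc weak-* ) (weak-* continuity tested against L^1 functions
  of bounded support), (jointly measurable on (0,T) \<times> R^N), solving
  \<partial>_t pi + div(a pi) = 0 in the sense of distributions.\<close>
definition W_set :: "real \<Rightarrow> (real \<Rightarrow> real^'n \<Rightarrow> real^'n) \<Rightarrow> (real \<Rightarrow> real^'n \<Rightarrow> real) set" where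
  "W_set T a = {\<pi>.
     (\<forall>t\<in>{0..T}. Linf_loc (\<pi> t)) \<and>
     (\<forall>\<psi>::real^'n \<Rightarrow> real. integrable lebesgue \<psi> \<and> bounded {x. \<psi> x \<noteq> 0} \<longrightarrow>
        continuous_on {0..T} (\<lambda>t. LINT x|lebesgue. \<pi> t x * \<psi> x)) \<and>
     set_borel_measurable lebesgue (ST T) (ucur \<pi>) \<and>
     (\<forall>\<phi>. test_fun T \<phi> \<longrightarrow>
        (LINT z|lebesgue. ucur \<pi> z * (dT \<phi> (fst z) (snd z) + a (fst z) (snd z) \<bullet> grad \<phi> (fst z) (snd z))) = 0)}"

definition E_set :: "real \<Rightarrow> (real \<Rightarrow> real^'n \<Rightarrow> real^'n) \<Rightarrow> (real \<Rightarrow> real^'n \<Rightarrow> real) set" where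
  "E_set T a = {p. Lip_loc T p \<and> transport_ae T a p \<and> (\<forall>x. p T x = 0)}"

definition Ve :: "real \<Rightarrow> (real \<Rightarrow> real^'n \<Rightarrow> real^'n) \<Rightarrow> (real \<times> (real^'n)) set" where
  "Ve T a = (\<Union>p\<in>E_set T a. {z \<in> ST T. ucur p z \<noteq> 0})"

definition V_set :: "real \<Rightarrow> (real \<Rightarrow> real^'n \<Rightarrow> real^'n) \<Rightarrow> (real \<Rightarrow> real^'n \<Rightarrow> real) set" where
  "V_set T a = {\<pi> \<in> W_set T a. AE z in lebesgue. z \<in> Ve T a \<longrightarrow> ucur \<pi> z = 0}"

text \<open>A function defined a.e. on (0,T) \<times> R^N belongs to V^T if some element of V^T
  agrees with it a.e.\<close>
definition in_V :: "real \<Rightarrow> (real \<Rightarrow> real^'n \<Rightarrow> real^'n) \<Rightarrow> (real \<Rightarrow> real^'n \<Rightarrow> real) \<Rightarrow> bool" where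
  "in_V T a f \<longleftrightarrow> (\<exists>\<pi>\<in>V_set T a. AE z in lebesgue. z \<in> ST T \<longrightarrow> ucur \<pi> z = ucur f z)"

end

theory Submission
  imports Defs
begin


lemma ball_affine_image:
  fixes x :: "'a::euclidean_space"
  assumes "d > 0"
  shows "(\<lambda>y. d *\<^sub>R y + x) ` ball 0 1 = ball x d"
proof
  show "(\<lambda>y. d *\<^sub>R y + x) ` ball 0 1 \<subseteq> ball x d"
    using assms by (auto simp: dist_norm)
  show "ball x d \<subseteq> (\<lambda>y. d *\<^sub>R y + x) ` ball 0 1"
  proof
    fix y assume "y \<in> ball x d"
    then have "norm (y - x) < d" by (simp add: dist_norm norm_minus_commute)
    then have "(1/d) *\<^sub>R (y - x) \<in> ball 0 1" using assms by (simp add: dist_norm)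
    moreover have "y = d *\<^sub>R ((1/d) *\<^sub>R (y - x)) + x" using assms by simp
    ultimately show "y \<in> (\<lambda>y. d *\<^sub>R y + x) ` ball 0 1" by blast
  qed
qed

lemma flat_negligible:
  fixes S :: "'a::euclidean_space set"
  shows "negligible {x\<in>S. \<exists>v. v \<noteq> 0 \<and> (\<forall>\<xi>>0. \<exists>e>0. \<forall>y\<in>S. y \<noteq> x \<and> norm (y - x) < e \<longrightarrow> \<bar>v \<bullet> (y - x)\<bar> < \<xi> * norm (y - x))}"
  unfolding negligible_eq_zero_density
proof (intro ballI allI impI)
  fix x and r e :: real
  assume x: "x \<in> {x\<in>S. \<exists>v. v \<noteq> 0 \<and> (\<forall>\<xi>>0. \<exists>e>0. \<forall>y\<in>S. y \<noteq> x \<and> norm (y - x) < e \<longrightarrow> \<bar>v \<bullet> (y - x)\<bar> < \<xi> * norm (y - x))}"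
    and r: "r > 0" and e: "e > 0"
  then obtain v where "v \<noteq> 0" and flat: "\<And>\<xi>. \<xi> > 0 \<Longrightarrow> \<exists>e>0. \<forall>y\<in>S. y \<noteq> x \<and> norm (y - x) < e \<longrightarrow> \<bar>v \<bullet> (y - x)\<bar> < \<xi> * norm (y - x)"
    by blast
  define K where "K = measure lebesgue (ball (0::'a) 1)"
  have K: "K > 0" unfolding K_def by (simp add: content_ball_pos)
  define A where "A k = ball (0::'a) 1 \<inter> {y. \<bar>v \<bullet> y\<bar> < 1 / Suc k}" for k :: nat
  have Al: "A k \<in> lmeasurable" for k
  proof -
    have "open {y::'a. \<bar>v \<bullet> y\<bar> < 1 / Suc k}"
      by (intro open_Collect_less continuous_intros)
    then show ?thesis unfolding A_def
      by (simp add: fmeasurable_Int_fmeasurable borel_open)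
  qed
  have dec: "decseq A"
  proof (rule decseq_SucI)
    fix k
    have "1 / real (Suc (Suc k)) \<le> 1 / Suc k" by (simp add: frac_le)
    then show "A (Suc k) \<subseteq> A k" unfolding A_def by auto
  qed
  have INT: "(\<Inter>k. A k) \<subseteq> {y. v \<bullet> y = 0}"
  proof
    fix y assume y: "y \<in> (\<Inter>k. A k)"
    show "y \<in> {y. v \<bullet> y = 0}"
    proof (rule ccontr)
      assume "y \<notin> {y. v \<bullet> y = 0}"
      then have "\<bar>v \<bullet> y\<bar> > 0" by simp
      then obtain k :: nat where "1 / Suc k < \<bar>v \<bullet> y\<bar>"
        using nat_approx_posE by blast
      moreover have "y \<in> A k" using y by blast
      ultimately show False unfolding A_def by auto
    qed
  qed
  have "negligible (\<Inter>k. A k)"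
    using negligible_hyperplane[of v 0] \<open>v \<noteq> 0\<close> INT negligible_subset by blast
  then have m0: "measure lebesgue (\<Inter>k. A k) = 0"
    using negligible_imp_measure0 by blast
  have "(\<lambda>k. measure lebesgue (A k)) \<longlonglongrightarrow> measure lebesgue (\<Inter>k. A k)"
    proof (rule Lim_measure_decseq)
    show "range A \<subseteq> sets lebesgue" using Al by (auto simp: fmeasurable_def)
    show "decseq A" by (rule dec)
    show "emeasure lebesgue (A k) \<noteq> \<infinity>" for k using Al[of k] fmeasurableD2 by (metis infinity_ennreal_def)
  qed
  then have "(\<lambda>k. measure lebesgue (A k)) \<longlonglongrightarrow> 0" using m0 by simp
  moreover have "e * K > 0" using e K by simp
  ultimately have "eventually (\<lambda>k. measure lebesgue (A k) < e * K) sequentially"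
    by (rule order_tendstoD(2))
  then obtain k where k: "measure lebesgue (A k) < e * K"
    by (meson eventually_sequentially order_refl)
  define \<xi> where "\<xi> = 1 / real (Suc k)"
  have "\<xi> > 0" by (simp add: \<xi>_def)
  then obtain e0 where "e0 > 0" and e0: "\<And>y. y\<in>S \<Longrightarrow> y \<noteq> x \<Longrightarrow> norm (y - x) < e0 \<Longrightarrow> \<bar>v \<bullet> (y - x)\<bar> < \<xi> * norm (y - x)"
    using flat by blast
  define d where "d = min e0 r"
  have d: "d > 0" "d \<le> r" "d \<le> e0" using \<open>e0 > 0\<close> r by (auto simp: d_def)
  define U where "U = (\<lambda>y. d *\<^sub>R y + x) ` A k"
  have Ueq: "U = ball x d \<inter> {y. \<bar>v \<bullet> (y - x)\<bar> < \<xi> * d}"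
  proof
    show "U \<subseteq> ball x d \<inter> {y. \<bar>v \<bullet> (y - x)\<bar> < \<xi> * d}"
    proof
      fix y assume "y \<in> U"
      then obtain w where w: "w \<in> A k" and y: "y = d *\<^sub>R w + x" unfolding U_def by blast
      have "norm w < 1" "\<bar>v \<bullet> w\<bar> < \<xi>" using w unfolding A_def \<xi>_def by auto
      then have "d * norm w < d" "d * \<bar>v \<bullet> w\<bar> < d * \<xi>" using d by auto
      then show "y \<in> ball x d \<inter> {y. \<bar>v \<bullet> (y - x)\<bar> < \<xi> * d}"
        using d y by (auto simp: dist_norm abs_mult mult.commute)
    qed
    show "ball x d \<inter> {y. \<bar>v \<bullet> (y - x)\<bar> < \<xi> * d} \<subseteq> U"
    proof
      fix y assume y: "y \<in> ball x d \<inter> {y. \<bar>v \<bullet> (y - x)\<bar> < \<xi> * d}"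
      define w where "w = (1/d) *\<^sub>R (y - x)"
      have "norm (y - x) < d" using y by (simp add: dist_norm norm_minus_commute)
      then have "norm w < 1" using d by (simp add: w_def)
      moreover have "\<bar>v \<bullet> w\<bar> < \<xi>"
      proof -
        have "\<bar>v \<bullet> w\<bar> = \<bar>v \<bullet> (y - x)\<bar> / d" using d by (simp add: w_def abs_mult)
        also have "\<dots> < \<xi>" using y d by (simp add: divide_less_eq)
        finally show ?thesis .
      qed
      ultimately have "w \<in> A k" unfolding A_def \<xi>_def by simp
      moreover have "y = d *\<^sub>R w + x" using d by (simp add: w_def)
      ultimately show "y \<in> U" unfolding U_def by blast
    qed
  qed
  have mU: "measure lebesgue U = d ^ DIM('a) * measure lebesgue (A k)"
    unfolding U_def using measure_lebesgue_affine[of d x "A k"] d by simp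
  have mB: "measure lebesgue (ball x d) = d ^ DIM('a) * K"
    unfolding K_def using measure_lebesgue_affine[of d x "ball 0 1"] d ball_affine_image[of d x] by simp
  show "\<exists>d>0. d \<le> r \<and> (\<exists>U. {x \<in> S. \<exists>v. v \<noteq> 0 \<and> (\<forall>\<xi>>0. \<exists>e>0. \<forall>y\<in>S. y \<noteq> x \<and> norm (y - x) < e \<longrightarrow> \<bar>v \<bullet> (y - x)\<bar> < \<xi> * norm (y - x))} \<inter> ball x d \<subseteq> U \<and>
          U \<in> lmeasurable \<and> measure lebesgue U < e * measure lebesgue (ball x d))"
  proof (intro exI conjI)
    show "d > 0" "d \<le> r" using d by auto
    show "{x \<in> S. \<exists>v. v \<noteq> 0 \<and> (\<forall>\<xi>>0. \<exists>e>0. \<forall>y\<in>S. y \<noteq> x \<and> norm (y - x) < e \<longrightarrow> \<bar>v \<bullet> (y - x)\<bar> < \<xi> * norm (y - x))} \<inter> ball x d \<subseteq> U"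
    proof
      fix y assume y: "y \<in> {x \<in> S. \<exists>v. v \<noteq> 0 \<and> (\<forall>\<xi>>0. \<exists>e>0. \<forall>y\<in>S. y \<noteq> x \<and> norm (y - x) < e \<longrightarrow> \<bar>v \<bullet> (y - x)\<bar> < \<xi> * norm (y - x))} \<inter> ball x d"
      then have yS: "y \<in> S" and yd: "norm (y - x) < d" by (auto simp: dist_norm norm_minus_commute)
      have "\<bar>v \<bullet> (y - x)\<bar> < \<xi> * d"
      proof (cases "y = x")
        case True then show ?thesis using \<open>\<xi> > 0\<close> d by simp
      next
        case False
        then have "\<bar>v \<bullet> (y - x)\<bar> < \<xi> * norm (y - x)" using e0 yS yd d by auto
        also have "\<dots> \<le> \<xi> * d" using yd \<open>\<xi> > 0\<close> by simp
        finally show ?thesis .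
      qed
      then show "y \<in> U" unfolding Ueq using yd by (simp add: dist_norm norm_minus_commute)
    qed
    show "U \<in> lmeasurable"
    proof -
      have "open {y. \<bar>v \<bullet> (y - x)\<bar> < \<xi> * d}"
        by (intro open_Collect_less continuous_intros)
      then show ?thesis unfolding Ueq
        by (simp add: fmeasurable_Int_fmeasurable borel_open)
    qed
    show "measure lebesgue U < e * measure lebesgue (ball x d)"
      unfolding mU mB using k d K by simp
  qed
qed

lemma zero_set_deriv_negligible:
  fixes f :: "'a::euclidean_space \<Rightarrow> real"
  shows "negligible {x. f x = 0 \<and> f differentiable (at x) \<and> frechet_derivative f (at x) \<noteq> (\<lambda>h. 0)}"
proof (rule negligible_subset[OF flat_negligible[of "{x. f x = 0}"]])
  show "{x. f x = 0 \<and> f differentiable (at x) \<and> frechet_derivative f (at x) \<noteq> (\<lambda>h. 0)}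
    \<subseteq> {x \<in> {x. f x = 0}. \<exists>v. v \<noteq> 0 \<and> (\<forall>\<xi>>0. \<exists>e>0. \<forall>y\<in>{x. f x = 0}. y \<noteq> x \<and> norm (y - x) < e \<longrightarrow> \<bar>v \<bullet> (y - x)\<bar> < \<xi> * norm (y - x))}"
  proof
    fix x assume x: "x \<in> {x. f x = 0 \<and> f differentiable (at x) \<and> frechet_derivative f (at x) \<noteq> (\<lambda>h. 0)}"
    define D where "D = frechet_derivative f (at x)"
    have fx: "f x = 0" using x by simp
    have hd: "(f has_derivative D) (at x)" unfolding D_def using x frechet_derivative_works by blast
    then have bl: "bounded_linear D" by (rule has_derivative_bounded_linear)
    then have lin: "linear D" by (rule bounded_linear.linear)
    define v where "v = adjoint D 1"
    have Dv: "D h = v \<bullet> h" for h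
      using adjoint_works[OF lin, of h 1] by (simp add: v_def inner_commute)
    have "v \<noteq> 0"
    proof
      assume "v = 0"
      then have "D = (\<lambda>h. 0)" using Dv by (simp add: fun_eq_iff)
      then show False using x D_def by simp
    qed
    moreover have "\<forall>\<xi>>0. \<exists>e>0. \<forall>y\<in>{x. f x = 0}. y \<noteq> x \<and> norm (y - x) < e \<longrightarrow> \<bar>v \<bullet> (y - x)\<bar> < \<xi> * norm (y - x)"
    proof (intro allI impI)
      fix \<xi> :: real assume "\<xi> > 0"
      then have "\<xi>/2 > 0" by simp
      with hd obtain e where "e > 0" and e: "\<And>y. norm (y - x) < e \<Longrightarrow> norm (f y - f x - D (y - x)) \<le> \<xi>/2 * norm (y - x)"
        unfolding has_derivative_at_alt by blast
      show "\<exists>e>0. \<forall>y\<in>{x. f x = 0}. y \<noteq> x \<and> norm (y - x) < e \<longrightarrow> \<bar>v \<bullet> (y - x)\<bar> < \<xi> * norm (y - x)"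
      proof (intro exI conjI ballI impI)
        show "e > 0" by fact
        fix y assume y: "y \<in> {x. f x = 0}" and yy: "y \<noteq> x \<and> norm (y - x) < e"
        then have "norm (f y - f x - D (y - x)) \<le> \<xi>/2 * norm (y - x)" using e by blast
        then have "\<bar>v \<bullet> (y - x)\<bar> \<le> \<xi>/2 * norm (y - x)" using y fx Dv by simp
        also have "\<dots> < \<xi> * norm (y - x)" using yy \<open>\<xi> > 0\<close> by simp
        finally show "\<bar>v \<bullet> (y - x)\<bar> < \<xi> * norm (y - x)" .
      qed
    qed
    ultimately show "x \<in> {x \<in> {x. f x = 0}. \<exists>v. v \<noteq> 0 \<and> (\<forall>\<xi>>0. \<exists>e>0. \<forall>y\<in>{x. f x = 0}. y \<noteq> x \<and> norm (y - x) < e \<longrightarrow> \<bar>v \<bullet> (y - x)\<bar> < \<xi> * norm (y - x))}"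
      using fx by blast
  qed
qed



lemma deriv_diff:
  fixes P Q :: "real \<Rightarrow> 'b::euclidean_space \<Rightarrow> real"
  assumes "ucur P differentiable (at z)" "ucur Q differentiable (at z)"
  shows "ucur (\<lambda>t x. P t x - Q t x) differentiable (at z)"
    and "frechet_derivative (ucur (\<lambda>t x. P t x - Q t x)) (at z) =
         (\<lambda>h. frechet_derivative (ucur P) (at z) h - frechet_derivative (ucur Q) (at z) h)"
proof -
  have h1: "(ucur P has_derivative frechet_derivative (ucur P) (at z)) (at z)"
    using assms(1) frechet_derivative_works by blast
  have h2: "(ucur Q has_derivative frechet_derivative (ucur Q) (at z)) (at z)"
    using assms(2) frechet_derivative_works by blast
  have h: "(ucur (\<lambda>t x. P t x - Q t x) has_derivative
         (\<lambda>h. frechet_derivative (ucur P) (at z) h - frechet_derivative (ucur Q) (at z) h)) (at z)"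
    using has_derivative_diff[OF h1 h2] .
  then show "ucur (\<lambda>t x. P t x - Q t x) differentiable (at z)"
    using h unfolding differentiable_def by blast
  from h show "frechet_derivative (ucur (\<lambda>t x. P t x - Q t x)) (at z) =
         (\<lambda>h. frechet_derivative (ucur P) (at z) h - frechet_derivative (ucur Q) (at z) h)"
    by (rule frechet_derivative_at[symmetric])
qed

theorem mainTheorem5:
  fixes T :: real
    and a :: "real \<Rightarrow> real^'n::finite \<Rightarrow> real^'n"
    and p q :: "'n \<Rightarrow> real \<Rightarrow> real^'n \<Rightarrow> real"
  assumes "0 < T"
    and "Linf_field T a"
    and "\<And>i. Lip_loc T (p i)" and "\<And>i. Lip_loc T (q i)"
    and "\<And>i. transport_ae T a (p i)" and "\<And>i. transport_ae T a (q i)"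
    and "\<And>i x. p i T x = q i T x"
    and "in_V T a (Jac p)" and "in_V T a (Jac q)"
  shows "AE z in lebesgue. z \<in> {0<..<T} \<times> UNIV \<longrightarrow> Jac p (fst z) (snd z) = Jac q (fst z) (snd z)"
proof -
  define f where "f i = (\<lambda>t x. p i t x - q i t x)" for i
  have fE: "f i \<in> E_set T a" for i
  proof -
    have "Lip_loc T (f i)"
      unfolding Lip_loc_def
    proof (intro allI impI)
      fix K :: "(real \<times> (real^'n)) set" assume K: "compact K \<and> K \<subseteq> {0..T} \<times> UNIV"
      obtain C where C: "C-lipschitz_on K (ucur (p i))" using assms(3)[of i] K unfolding Lip_loc_def by blast
      obtain D where D: "D-lipschitz_on K (ucur (q i))" using assms(4)[of i] K unfolding Lip_loc_def by blast
      have "(C + D)-lipschitz_on K (ucur (f i))"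
        unfolding f_def using lipschitz_on_diff[OF C D] by simp
      then show "\<exists>C. C-lipschitz_on K (ucur (f i))" by blast
    qed
    moreover have "transport_ae T a (f i)"
      unfolding transport_ae_def
    proof -
      have "AE z in lebesgue. z \<in> ST T \<longrightarrow>
          (ucur (p i) differentiable (at z) \<and> dT (p i) (fst z) (snd z) + a (fst z) (snd z) \<bullet> grad (p i) (fst z) (snd z) = 0) \<and>
          (ucur (q i) differentiable (at z) \<and> dT (q i) (fst z) (snd z) + a (fst z) (snd z) \<bullet> grad (q i) (fst z) (snd z) = 0)"
        using assms(5)[of i] assms(6)[of i] unfolding transport_ae_def by eventually_elim blast
      then show "AE z in lebesgue. z \<in> ST T \<longrightarrow>
          ucur (f i) differentiable (at z) \<and> dT (f i) (fst z) (snd z) + a (fst z) (snd z) \<bullet> grad (f i) (fst z) (snd z) = 0"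
      proof eventually_elim
        case (elim z)
        show ?case
        proof
          assume z: "z \<in> ST T"
          with elim have dp: "ucur (p i) differentiable (at z)" and dq: "ucur (q i) differentiable (at z)"
            and ep: "dT (p i) (fst z) (snd z) + a (fst z) (snd z) \<bullet> grad (p i) (fst z) (snd z) = 0"
            and eq: "dT (q i) (fst z) (snd z) + a (fst z) (snd z) \<bullet> grad (q i) (fst z) (snd z) = 0"
            by auto
          have z': "z = (fst z, snd z)" by simp
          note dd = deriv_diff[OF dp dq]
          have "dT (f i) (fst z) (snd z) = dT (p i) (fst z) (snd z) - dT (q i) (fst z) (snd z)"
            unfolding dT_def f_def using dd(2) by simp
          moreover have "grad (f i) (fst z) (snd z) = grad (p i) (fst z) (snd z) - grad (q i) (fst z) (snd z)"
            unfolding grad_def f_def using dd(2) by (simp add: vec_eq_iff)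
          ultimately have "dT (f i) (fst z) (snd z) + a (fst z) (snd z) \<bullet> grad (f i) (fst z) (snd z) = 0"
            using ep eq by (simp only: inner_diff_right)
          moreover have "ucur (f i) differentiable (at z)" unfolding f_def using dd(1) by simp
          ultimately show "ucur (f i) differentiable (at z) \<and> dT (f i) (fst z) (snd z) + a (fst z) (snd z) \<bullet> grad (f i) (fst z) (snd z) = 0"
            by blast
        qed
      qed
    qed
    moreover have "\<forall>x. f i T x = 0" using assms(7) by (simp add: f_def)
    ultimately show ?thesis unfolding E_set_def by blast
  qed
  obtain \<pi>p where \<pi>p: "\<pi>p \<in> V_set T a" and \<pi>pJ: "AE z in lebesgue. z \<in> ST T \<longrightarrow> ucur \<pi>p z = ucur (Jac p) z"
    using assms(8) unfolding in_V_def by blast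
  obtain \<pi>q where \<pi>q: "\<pi>q \<in> V_set T a" and \<pi>qJ: "AE z in lebesgue. z \<in> ST T \<longrightarrow> ucur \<pi>q z = ucur (Jac q) z"
    using assms(9) unfolding in_V_def by blast
  have \<pi>p0: "AE z in lebesgue. z \<in> Ve T a \<longrightarrow> ucur \<pi>p z = 0" using \<pi>p unfolding V_set_def by blast
  have \<pi>q0: "AE z in lebesgue. z \<in> Ve T a \<longrightarrow> ucur \<pi>q z = 0" using \<pi>q unfolding V_set_def by blast
  have diffp: "AE z in lebesgue. \<forall>i. z \<in> ST T \<longrightarrow> ucur (p i) differentiable (at z)"
  proof (rule eventually_all_finite)
    fix i
    show "AE z in lebesgue. z \<in> ST T \<longrightarrow> ucur (p i) differentiable (at z)"
      using assms(5)[of i] unfolding transport_ae_def by eventually_elim blast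
  qed
  have diffq: "AE z in lebesgue. \<forall>i. z \<in> ST T \<longrightarrow> ucur (q i) differentiable (at z)"
  proof (rule eventually_all_finite)
    fix i
    show "AE z in lebesgue. z \<in> ST T \<longrightarrow> ucur (q i) differentiable (at z)"
      using assms(6)[of i] unfolding transport_ae_def by eventually_elim blast
  qed
  have nul: "AE z in lebesgue. \<forall>i. \<not> (ucur (f i) z = 0 \<and> ucur (f i) differentiable (at z) \<and>
      frechet_derivative (ucur (f i)) (at z) \<noteq> (\<lambda>h. 0))"
  proof (rule eventually_all_finite)
    fix i
    have "AE z in lebesgue. z \<notin> {z. ucur (f i) z = 0 \<and> ucur (f i) differentiable (at z) \<and>
      frechet_derivative (ucur (f i)) (at z) \<noteq> (\<lambda>h. 0)}"
      by (rule AE_not_in) (simp only: negligible_iff_null_sets[symmetric] zero_set_deriv_negligible)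
    then show "AE z in lebesgue. \<not> (ucur (f i) z = 0 \<and> ucur (f i) differentiable (at z) \<and>
      frechet_derivative (ucur (f i)) (at z) \<noteq> (\<lambda>h. 0))" by simp
  qed
  show ?thesis
    using \<pi>pJ \<pi>qJ \<pi>p0 \<pi>q0 diffp diffq nul
  proof eventually_elim
    case (elim z)
    show ?case
    proof
      assume z: "z \<in> {0<..<T} \<times> UNIV"
      show "Jac p (fst z) (snd z) = Jac q (fst z) (snd z)"
      proof (cases "z \<in> Ve T a")
        case True
        have zS: "z \<in> ST T" using z by simp
        have "Jac p (fst z) (snd z) = ucur \<pi>p z" using elim(1) zS by simp
        also have "\<dots> = 0" using elim(3) True by simp
        also have "\<dots> = ucur \<pi>q z" using elim(4) True by simp
        also have "\<dots> = Jac q (fst z) (snd z)" using elim(2) zS by simp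
        finally show ?thesis .
      next
        case False
        have "grad (p i) (fst z) (snd z) = grad (q i) (fst z) (snd z)" for i
        proof -
          have "ucur (f i) z = 0"
          proof (rule ccontr)
            assume "ucur (f i) z \<noteq> 0"
            then have "z \<in> Ve T a" using fE[of i] z unfolding Ve_def by blast
            then show False using False by blast
          qed
          have dp: "ucur (p i) differentiable (at z)" and dq: "ucur (q i) differentiable (at z)"
            using elim(5,6) z by blast+
          note dd = deriv_diff[OF dp dq]
          have fd: "ucur (f i) differentiable (at z)" using dd(1) by (simp add: f_def)
          have "frechet_derivative (ucur (f i)) (at z) = (\<lambda>h. 0)"
            using elim(7) \<open>ucur (f i) z = 0\<close> fd by blast
          moreover have "frechet_derivative (ucur (f i)) (at z) =
              (\<lambda>h. frechet_derivative (ucur (p i)) (at z) h - frechet_derivative (ucur (q i)) (at z) h)"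
            using dd(2) by (simp add: f_def)
          ultimately have "frechet_derivative (ucur (p i)) (at z) h - frechet_derivative (ucur (q i)) (at z) h = 0" for h
            by (metis (no_types))
          then have "frechet_derivative (ucur (p i)) (at z) h = frechet_derivative (ucur (q i)) (at z) h" for h
            by simp
          then show ?thesis unfolding grad_def by simp
        qed
        then show ?thesis unfolding Jac_def by simp
      qed
    qed
  qed
qed


end
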